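(* Let $F(z)=\sum_{k=0}^\infty b_k z^k\in\mathcal{B}$ and let $n\ge 1$ be an integer. Then \[ \sum_{k=n+1}^{\infty}k^2|b_k|^2r^{2k-2}\le \frac{(n+2)^{n+2}}{4n^n}\,r^{2n},\qquad 0\le r\le \sqrt{\frac{n}{n+2}}. \] Moreover, equality holds for the function $F_n\in\mathcal{B}$ with $F_n(0)=0$ and $F_n'(z)=\frac{n+2}{2}\left(\frac{n+2}{n}\right)^{n/2}z^n$.
   Context: $\mathbb{D}$ denotes the open unit disc. $\mathcal{B}$ is the class of functions $F$ analytic in $\mathbb{D}$ satisfying $|F'(z)|\le \frac{1}{1-|z|^2}$ for all $z\in\mathbb{D}$. For $F\in\mathcal{B}$ we write its Taylor expansion as $F(z)=\sum_{k=0}^\infty b_k z^k$. *)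

theory Defs
  imports "HOL-Analysis.Analysis"
begin

definition classB :: "(complex \<Rightarrow> complex) \<Rightarrow> bool" where
  "classB F \<longleftrightarrow> F holomorphic_on ball 0 1 \<and>
     (\<forall>z\<in>ball 0 1. norm (deriv F z) \<le> 1 / (1 - norm z ^ 2))"

definition taylor_coeff :: "(complex \<Rightarrow> complex) \<Rightarrow> nat \<Rightarrow> complex" where
  "taylor_coeff F k = (deriv ^^ k) F 0 / of_nat (fact k)"

end

theory Submission
  imports Defs "HOL-Complex_Analysis.Complex_Analysis"
begin

lemma bessel:
  fixes f :: "complex \<Rightarrow> complex" and \<rho> M :: real
  assumes holf: "f holomorphic_on ball 0 1" and rp: "0 < \<rho>" "\<rho> < 1"
    and bd: "\<And>z. norm z = \<rho> \<Longrightarrow> norm (f z) \<le> M"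
  defines "a \<equiv> \<lambda>m. (deriv ^^ m) f 0 / fact m"
  shows "summable (\<lambda>m. norm (a m)^2 * \<rho>^(2*m)) \<and> (\<Sum>m. norm (a m)^2 * \<rho>^(2*m)) \<le> M^2"
proof -
  have "norm (f (complex_of_real \<rho>)) \<le> M" by (rule bd) (use rp in simp)
  then have M0: "0 \<le> M" by (rule order_trans[OF norm_ge_zero])
  have ser: "\<And>w. w \<in> ball 0 1 \<Longrightarrow> (\<lambda>m. a m * w^m) sums f w"
    using holomorphic_power_series[OF holf] by (simp add: a_def)
  have "summable (\<lambda>m. a m * (complex_of_real ((1+\<rho>)/2))^m)"
  proof -
    have "complex_of_real ((1+\<rho>)/2) \<in> ball 0 1" using rp by (simp only: mem_ball dist_0_norm norm_of_real) simp
    then show ?thesis using ser sums_summable by blast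
  qed
  then have sA: "summable (\<lambda>m. norm (a m * (complex_of_real \<rho>)^m))"
  proof (rule powser_insidea)
    show "norm (complex_of_real \<rho>) < norm (complex_of_real ((1+\<rho>)/2))"
      using rp by (simp only: norm_of_real) auto
  qed
  define g where "g \<equiv> \<lambda>m z. f z * (cnj (a m) * complex_of_real (\<rho>^(2*m)) / z^(Suc m))"
  have gbd: "norm (g m z) \<le> M / \<rho> * norm (a m * (complex_of_real \<rho>)^m)" if "z \<in> sphere 0 \<rho>" for m z
  proof -
    have nz: "norm z = \<rho>" using that by simp
    have e1: "norm (g m z) = norm (f z) * (norm (a m) * \<rho>^(2*m) / \<rho>^(Suc m))"
      unfolding g_def using rp by (simp add: norm_mult norm_divide norm_power nz)
    have "\<rho>^(2*m) = \<rho>^m * \<rho>^m" by (simp only: mult_2 power_add)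
    moreover have "\<rho>^(Suc m) = \<rho> * \<rho>^m" by (simp only: power_Suc)
    ultimately have e2: "norm (a m) * \<rho>^(2*m) / \<rho>^(Suc m) = norm (a m) * (\<rho>^m / \<rho>)" using rp by simp
    have e3: "norm (f z) * (norm (a m) * (\<rho>^m / \<rho>)) \<le> M * (norm (a m) * (\<rho>^m / \<rho>))"
      by (rule mult_right_mono) (use bd nz rp in auto)
    have "norm (a m * (complex_of_real \<rho>)^m) = norm (a m) * \<rho>^m"
      using rp by (simp add: norm_mult norm_power)
    then have e4: "M * (norm (a m) * (\<rho>^m / \<rho>)) = M / \<rho> * norm (a m * (complex_of_real \<rho>)^m)"
      by simp
    show ?thesis unfolding e1 e2 e4[symmetric] by (rule e3)
  qed
  have ul: "uniform_limit (sphere 0 \<rho>) (\<lambda>N z. \<Sum>m<N. g m z) (\<lambda>z. \<Sum>m. g m z) sequentially"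
    by (rule Weierstrass_m_test[OF gbd]) (use sA in \<open>auto intro: summable_mult\<close>)
  have cont: "continuous_on (cball 0 \<rho>) f"
    by (rule holomorphic_on_imp_continuous_on, rule holomorphic_on_subset[OF holf]) (use rp in auto)
  have holr: "f holomorphic_on ball 0 \<rho>"
    by (rule holomorphic_on_subset[OF holf]) (use rp in auto)
  have gint: "(g m has_contour_integral (2*pi*\<i>) * complex_of_real (norm (a m)^2 * \<rho>^(2*m))) (circlepath 0 \<rho>)" for m
  proof -
    have "((\<lambda>u. f u / (u - 0) ^ Suc m) has_contour_integral (2*pi*\<i>) / fact m * (deriv ^^ m) f 0) (circlepath 0 \<rho>)"
      by (rule Cauchy_has_contour_integral_higher_derivative_circlepath[OF cont holr]) (use rp in auto)
    then have "((\<lambda>u. (cnj (a m) * complex_of_real (\<rho>^(2*m))) * (f u / (u - 0) ^ Suc m)) has_contour_integral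
       (cnj (a m) * complex_of_real (\<rho>^(2*m))) * ((2*pi*\<i>) / fact m * (deriv ^^ m) f 0)) (circlepath 0 \<rho>)"
      by (rule has_contour_integral_lmul)
    moreover have "(cnj (a m) * complex_of_real (\<rho>^(2*m))) * ((2*pi*\<i>) / fact m * (deriv ^^ m) f 0)
        = (2*pi*\<i>) * complex_of_real (norm (a m)^2 * \<rho>^(2*m))"
    proof -
      have am: "(deriv ^^ m) f 0 = a m * fact m" by (simp add: a_def)
      have n2: "(complex_of_real (norm (a m)))^2 = a m * cnj (a m)"
        using complex_norm_square[of "a m"] by simp
      show ?thesis unfolding am by (simp add: n2 field_simps)
    qed
    ultimately show ?thesis unfolding g_def by (simp add: ac_simps)
  qed
  define s where "s \<equiv> \<lambda>N. \<Sum>m<N. norm (a m)^2 * \<rho>^(2*m)"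
  have pint: "((\<lambda>z. \<Sum>m<N. g m z) has_contour_integral (2*pi*\<i>) * complex_of_real (s N)) (circlepath 0 \<rho>)" for N
    using has_contour_integral_sum[of "{..<N}" g "\<lambda>m. (2*pi*\<i>) * complex_of_real (norm (a m)^2 * \<rho>^(2*m))" "circlepath 0 \<rho>"]
    gint by (simp add: s_def sum_distrib_left)
  have ev_int: "\<forall>\<^sub>F N in sequentially. (\<lambda>z. \<Sum>m<N. g m z) contour_integrable_on (circlepath 0 \<rho>)"
    using pint by (intro always_eventually allI) (rule has_contour_integral_integrable)
  note lim = contour_integral_uniform_limit_circlepath[OF ev_int ul trivial_limit_sequentially rp(1)]
  define I where "I \<equiv> contour_integral (circlepath 0 \<rho>) (\<lambda>z. \<Sum>m. g m z)"
  have ceq: "contour_integral (circlepath 0 \<rho>) (\<lambda>z. \<Sum>m<N. g m z) = (2*pi*\<i>) * complex_of_real (s N)" for N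
    by (rule contour_integral_unique[OF pint])
  have L: "(\<lambda>N. (2*pi*\<i>) * complex_of_real (s N)) \<longlonglongrightarrow> I"
    using lim(2) unfolding I_def ceq .
  have Lval: "(\<Sum>m. g m z) = complex_of_real (norm (f z)^2) / z" if "norm z = \<rho>" for z
  proof -
    have z0: "z \<noteq> 0" using that rp by auto
    have zb: "z \<in> ball 0 1" using that rp by simp
    have "(\<lambda>m. cnj (a m * z^m)) sums cnj (f z)" by (rule sums_cnj[THEN iffD2, OF ser[OF zb]])
    then have "(\<lambda>m. f z * (cnj (a m * z^m) / z)) sums (f z * (cnj (f z) / z))"
      by (intro sums_mult sums_divide)
    moreover have "f z * (cnj (a m * z^m) / z) = g m z" for m
    proof -
      have zc: "z * cnj z = complex_of_real (\<rho>^2)" using complex_norm_square[of z] that by simp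
      have "complex_of_real (\<rho>^(2*m)) = (z * cnj z)^m"
        unfolding zc by (simp add: power_mult)
      then show ?thesis unfolding g_def using z0
        by (simp add: field_simps power_mult_distrib)
    qed
    ultimately have "(\<lambda>m. g m z) sums (f z * (cnj (f z) / z))" by simp
    then show ?thesis using complex_norm_square[of "f z"] by (simp add: sums_iff)
  qed
  have Ibd: "norm I \<le> M^2 / \<rho> * (2*pi*\<rho>)"
  proof (rule has_contour_integral_bound_circlepath)
    show "((\<lambda>z. \<Sum>m. g m z) has_contour_integral I) (circlepath 0 \<rho>)"
      unfolding I_def using lim(1) by (rule has_contour_integral_integral)
    show "norm ((\<Sum>m. g m z)) \<le> M^2/\<rho>" if "norm (z - 0) = \<rho>" for z
    proof -
      have nz: "norm z = \<rho>" using that by simp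
      have "norm (\<Sum>m. g m z) = norm (f z)^2 / \<rho>"
        unfolding Lval[OF nz] norm_divide norm_of_real nz by simp
      also have "\<dots> \<le> M^2 / \<rho>"
        using bd[OF nz] rp by (intro divide_right_mono power_mono) auto
      finally show ?thesis .
    qed
  qed (use rp M0 in auto)
  have "(\<lambda>N. norm ((2*pi*\<i>) * complex_of_real (s N))) \<longlonglongrightarrow> norm I"
    by (rule tendsto_norm[OF L])
  moreover have "norm ((2*pi*\<i>) * complex_of_real (s N)) = 2*pi * s N" for N
  proof -
    have "s N \<ge> 0" unfolding s_def by (simp add: sum_nonneg)
    then show ?thesis by (simp only: norm_mult norm_of_real) simp
  qed
  ultimately have "(\<lambda>N. 2*pi * s N) \<longlonglongrightarrow> norm I" by simp
  then have "(\<lambda>N. (2*pi * s N) / (2*pi)) \<longlonglongrightarrow> norm I / (2*pi)"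
    by (intro tendsto_divide) auto
  then have "s \<longlonglongrightarrow> norm I / (2*pi)" by simp
  then have sm: "(\<lambda>m. norm (a m)^2 * \<rho>^(2*m)) sums (norm I / (2*pi))"
    unfolding s_def sums_def .
  have "norm I / (2*pi) \<le> M^2" using Ibd rp by (simp add: field_simps)
  with sm show ?thesis by (auto simp: sums_iff)
qed
lemma amgm:
  fixes s :: real and n :: nat
  assumes "0 \<le> s" "s \<le> 1" "n \<ge> 1"
  shows "((real n + 2) / real n * s)^n * ((real n + 2) / 2 * (1 - s))^2 \<le> 1"
proof -
  define u where "u = (real n + 2) / real n * s"
  define v where "v = (real n + 2) / 2 * (1 - s)"
  define x where "x = (\<lambda>i::nat. if i < n then u else v)"
  have u0: "u \<ge> 0" and v0: "v \<ge> 0" using assms by (auto simp: u_def v_def)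
  have S: "(\<Sum>i<n+2. x i / real (card {..<n+2})) = (real n * u + 2 * v) / (real n + 2)"
    by (simp add: x_def sum_divide_distrib[symmetric] numeral_2_eq_2 add_divide_distrib add.commute)
  have "real n * u + 2 * v = real n + 2" using assms by (simp add: u_def v_def field_simps)
  then have S1: "(\<Sum>i<n+2. x i / real (card {..<n+2})) = 1" using S by simp
  have P: "(\<Prod>i<n+2. x i) = u^n * v^2"
    by (simp add: x_def numeral_2_eq_2 power2_eq_square)
  have "(\<Prod>i<n+2. x i) powr (1 / real (card {..<n+2})) \<le> 1"
  proof -
    have "(\<Prod>i<n+2. x i) powr (1 / real (card {..<n+2})) \<le> (\<Sum>i<n+2. x i / real (card {..<n+2}))"
      by (rule arith_geom_mean) (use u0 v0 in \<open>auto simp: x_def\<close>)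
    then show ?thesis using S1 by simp
  qed
  then have w1: "(u^n * v^2) powr (1 / (real n + 2)) \<le> 1" using P by (simp add: add.commute)
  moreover have "u^n * v^2 \<ge> 0" using u0 v0 by simp
  ultimately have "u^n * v^2 = ((u^n * v^2) powr (1 / (real n + 2))) powr (real n + 2)"
    by (simp add: powr_powr)
  also have "\<dots> \<le> 1 powr (real n + 2)"
    by (rule powr_mono2) (use w1 in auto)
  finally have "u^n * v^2 \<le> 1" by simp
  then show ?thesis by (simp add: u_def v_def)
qed

lemma csq:
  fixes n :: nat assumes "n \<ge> 1"
  shows "((real n + 2) / 2 * ((real n + 2) / real n) powr (real n / 2))^2
         = (real n + 2)^2 / 4 * ((real n + 2) / real n)^n"
proof -
  have x0: "(real n + 2) / real n > 0" using assms by simp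
  have "(((real n + 2) / real n) powr (real n / 2))^2 = ((real n + 2) / real n) powr (real n / 2) * ((real n + 2) / real n) powr (real n / 2)"
    by (simp only: power2_eq_square)
  also have "\<dots> = ((real n + 2) / real n) powr (real n / 2 + real n / 2)"
    by (simp only: powr_add)
  also have "\<dots> = ((real n + 2) / real n) ^ n"
    using x0 by (simp add: powr_realpow)
  finally show ?thesis by (simp add: power_mult_distrib power2_eq_square)
qed

lemma tc_shift: "taylor_coeff F (Suc m) = (deriv ^^ m) (deriv F) 0 / fact (Suc m)"
  unfolding taylor_coeff_def by (simp add: funpow_Suc_right del: funpow.simps) (simp add: algebra_simps)

theorem proposition1:
  fixes n :: nat
  assumes "n \<ge> 1"
  shows "(\<forall>F r. classB F \<longrightarrow> 0 \<le> r \<longrightarrow> r \<le> sqrt (real n / real (n + 2)) \<longrightarrow>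
            summable (\<lambda>j. real (j + n + 1) ^ 2 * norm (taylor_coeff F (j + n + 1)) ^ 2
                              * r ^ (2 * (j + n + 1) - 2)) \<and>
            (\<Sum>j. real (j + n + 1) ^ 2 * norm (taylor_coeff F (j + n + 1)) ^ 2
                              * r ^ (2 * (j + n + 1) - 2))
              \<le> real (n + 2) ^ (n + 2) / (4 * real n ^ n) * r ^ (2 * n))
       \<and> (\<forall>G. G holomorphic_on ball 0 1 \<longrightarrow> G 0 = 0 \<longrightarrow>
            (\<forall>z\<in>ball 0 1. deriv G z =
               complex_of_real ((real n + 2) / 2 * ((real n + 2) / real n) powr (real n / 2)) * z ^ n) \<longrightarrow>
            classB G \<and>
            (\<forall>r. 0 \<le> r \<longrightarrow> r \<le> sqrt (real n / real (n + 2)) \<longrightarrow>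
               (\<Sum>j. real (j + n + 1) ^ 2 * norm (taylor_coeff G (j + n + 1)) ^ 2
                              * r ^ (2 * (j + n + 1) - 2))
                 = real (n + 2) ^ (n + 2) / (4 * real n ^ n) * r ^ (2 * n)))"
proof (intro conjI allI impI)
  have n0: "real n > 0" using assms by simp
  have target: "real (n + 2) ^ (n + 2) / (4 * real n ^ n) = (real n + 2)^2 / 4 * ((real n + 2) / real n)^n"
    using n0 by (simp add: power_divide power_add field_simps) (simp add: power2_eq_square algebra_simps)
  define \<rho> where "\<rho> = sqrt (real n / real (n + 2))"
  have rp: "0 < \<rho>" "\<rho> < 1" using n0 by (auto simp: \<rho>_def divide_less_eq_1)
  have rsq: "\<rho>^2 = real n / (real n + 2)" unfolding \<rho>_def by simp
  {
    fix F r assume cB: "classB F" and r0: "0 \<le> r" and rle: "r \<le> sqrt (real n / real (n + 2))"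
    have holF: "F holomorphic_on ball 0 1" using cB by (simp add: classB_def)
    have holf: "deriv F holomorphic_on ball 0 1" by (rule holomorphic_deriv[OF holF open_ball])
    have bd: "norm (deriv F z) \<le> (real n + 2) / 2" if "norm z = \<rho>" for z
    proof -
      have "z \<in> ball 0 1" using that rp by simp
      then have "norm (deriv F z) \<le> 1 / (1 - norm z ^ 2)" using cB by (simp add: classB_def)
      also have "1 - norm z ^ 2 = 2 / (real n + 2)" using that rsq n0 by (simp add: field_simps)
      then have "1 / (1 - norm z ^ 2) = (real n + 2) / 2" by simp
      finally show ?thesis .
    qed
    define a where "a = (\<lambda>m. (deriv ^^ m) (deriv F) 0 / fact m)"
    define h where "h = (\<lambda>m. norm (a m)^2 * \<rho>^(2*m))"
    have B: "summable h" "suminf h \<le> ((real n + 2) / 2)^2"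
      using bessel[OF holf rp bd] unfolding h_def a_def by auto
    define K where "K = r^(2*n) / \<rho>^(2*n)"
    have K0: "K \<ge> 0" using r0 rp by (simp add: K_def)
    have teq: "real (j + n + 1) ^ 2 * norm (taylor_coeff F (j + n + 1)) ^ 2 * r ^ (2 * (j + n + 1) - 2)
        = norm (a (j+n))^2 * r^(2*(j+n))" for j
    proof -
      have tc: "taylor_coeff F (j + n + 1) = a (j+n) / of_nat (j+n+1)"
        using tc_shift[of F "j+n"] by (simp add: a_def field_simps)
      have nt: "norm (taylor_coeff F (j + n + 1)) = norm (a (j+n)) / real (j+n+1)"
        unfolding tc norm_divide norm_of_nat ..
      have k: "real (j + n + 1) ^ 2 * norm (taylor_coeff F (j + n + 1)) ^ 2 = norm (a (j+n))^2"
        unfolding nt by (simp add: power_divide)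
      have e: "2 * (j + n + 1) - 2 = 2*(j+n)" by simp
      show ?thesis unfolding k e ..
    qed
    have tle: "norm (a (j+n))^2 * r^(2*(j+n)) \<le> K * h (j+n)" for j
    proof -
      have "r^(2*j) \<le> \<rho>^(2*j)" using r0 rle by (intro power_mono) (auto simp: \<rho>_def)
      then have "r^(2*n) * r^(2*j) \<le> r^(2*n) * \<rho>^(2*j)" using r0 by (intro mult_left_mono) auto
      moreover have "K * \<rho>^(2*(j+n)) = r^(2*n) * \<rho>^(2*j)"
      proof -
        have p: "\<rho>^(2*(j+n)) = \<rho>^(2*j) * \<rho>^(2*n)" by (simp only: add_mult_distrib2 power_add)
        have "\<rho>^(2*n) > 0" using rp by simp
        then show ?thesis unfolding p K_def using rp by (simp add: field_simps)
      qed
      moreover have "r^(2*(j+n)) = r^(2*n) * r^(2*j)"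
      proof -
        have "2*(j+n) = 2*n + 2*j" by simp
        then show ?thesis by (simp only: power_add)
      qed
      ultimately have "r^(2*(j+n)) \<le> K * \<rho>^(2*(j+n))" by simp
      then show ?thesis unfolding h_def
        by (metis (no_types, lifting) mult.left_commute mult_left_mono zero_le_power2)
    qed
    have hs: "summable (\<lambda>j. h (j+n))" by (rule summable_ignore_initial_segment[OF B(1)])
    have h0: "h m \<ge> 0" for m by (simp add: h_def)
    have sK: "summable (\<lambda>j. K * h (j+n))" by (intro summable_mult hs)
    have S: "summable (\<lambda>j. norm (a (j+n))^2 * r^(2*(j+n)))"
    proof (rule summable_comparison_test'[OF sK, of 0])
      fix j :: nat assume "0 \<le> j"
      have "0 \<le> norm (a (j+n))^2 * r^(2*(j+n))" using r0 by simp
      then show "norm (norm (a (j+n))^2 * r^(2*(j+n))) \<le> K * h (j+n)"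
        using tle[of j] by (simp only: real_norm_def abs_of_nonneg)
    qed
    have "(\<Sum>j. norm (a (j+n))^2 * r^(2*(j+n))) \<le> (\<Sum>j. K * h (j+n))"
      by (rule suminf_le[OF tle S sK])
    also have "\<dots> = K * (\<Sum>j. h (j+n))" by (rule suminf_mult[OF hs])
    also have "(\<Sum>j. h (j+n)) \<le> suminf h"
      using suminf_split_initial_segment[OF B(1), of n] sum_nonneg[of "{..<n}" h] h0 by simp
    then have "K * (\<Sum>j. h (j+n)) \<le> K * ((real n + 2) / 2)^2"
      using B(2) K0 by (intro mult_left_mono) auto
    also have "K * ((real n + 2) / 2)^2 = real (n + 2) ^ (n + 2) / (4 * real n ^ n) * r ^ (2 * n)"
    proof -
      have rp2: "\<rho>^(2*n) = (real n / (real n + 2))^n" by (simp add: power_mult rsq)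
      have Kv: "K = r^(2*n) * ((real n + 2) / real n)^n"
        unfolding K_def rp2 using n0 by (simp add: power_divide)
      show ?thesis unfolding Kv target by (simp add: power_divide mult_ac)
    qed
    finally have le: "(\<Sum>j. norm (a (j+n))^2 * r^(2*(j+n))) \<le> real (n + 2) ^ (n + 2) / (4 * real n ^ n) * r ^ (2 * n)" .
    have "summable (\<lambda>j. real (j + n + 1) ^ 2 * norm (taylor_coeff F (j + n + 1)) ^ 2
                              * r ^ (2 * (j + n + 1) - 2)) \<and>
            (\<Sum>j. real (j + n + 1) ^ 2 * norm (taylor_coeff F (j + n + 1)) ^ 2
                              * r ^ (2 * (j + n + 1) - 2))
              \<le> real (n + 2) ^ (n + 2) / (4 * real n ^ n) * r ^ (2 * n)"
      unfolding teq using S le by simp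
  }
  note part1 = this
  fix F r
  assume "classB F" "0 \<le> r" "r \<le> sqrt (real n / real (n + 2))"
  then show "summable (\<lambda>j. real (j + n + 1) ^ 2 * norm (taylor_coeff F (j + n + 1)) ^ 2
                              * r ^ (2 * (j + n + 1) - 2))"
     "(\<Sum>j. real (j + n + 1) ^ 2 * norm (taylor_coeff F (j + n + 1)) ^ 2
                              * r ^ (2 * (j + n + 1) - 2))
              \<le> real (n + 2) ^ (n + 2) / (4 * real n ^ n) * r ^ (2 * n)"
    using part1 by auto
next
  have n0: "real n > 0" using assms by simp
  define c where "c = (real n + 2) / 2 * ((real n + 2) / real n) powr (real n / 2)"
  have c0: "c \<ge> 0" unfolding c_def by simp
  have c2: "c^2 = (real n + 2)^2 / 4 * ((real n + 2) / real n)^n"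
    unfolding c_def by (rule csq[OF assms])
  have target: "real (n + 2) ^ (n + 2) / (4 * real n ^ n) = (real n + 2)^2 / 4 * ((real n + 2) / real n)^n"
    using n0 by (simp add: power_divide power_add field_simps) (simp add: power2_eq_square algebra_simps)
  fix G :: "complex \<Rightarrow> complex"
  assume holG: "G holomorphic_on ball 0 1" and "G 0 = 0"
    and dG: "\<forall>z\<in>ball 0 1. deriv G z = complex_of_real ((real n + 2) / 2 * ((real n + 2) / real n) powr (real n / 2)) * z ^ n"
  then have dG': "\<And>z. z \<in> ball 0 1 \<Longrightarrow> deriv G z = complex_of_real c * z^n" by (simp add: c_def)
  show "classB G"
    unfolding classB_def
  proof (intro conjI ballI holG)
    fix z :: complex assume z: "z \<in> ball 0 1"
    define t where "t = norm z"
    have t0: "0 \<le> t" "t < 1" using z by (auto simp: t_def)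
    have nd: "norm (deriv G z) = c * t^n" using dG'[OF z] c0 by (simp add: norm_mult norm_power t_def)
    have A: "((real n + 2) / real n * t^2)^n * ((real n + 2) / 2 * (1 - t^2))^2 \<le> 1"
      by (rule amgm) (use t0 assms in \<open>auto simp: power_le_one\<close>)
    have "(c * t^n * (1 - t^2))^2 = ((real n + 2) / real n * t^2)^n * ((real n + 2) / 2 * (1 - t^2))^2"
      by (simp add: power_mult_distrib c2 power_mult[symmetric] mult.commute[of 2] power_divide) (simp add: algebra_simps power_mult_distrib power_divide power_mult)
    then have "(c * t^n * (1 - t^2))^2 \<le> 1^2" using A by simp
    then have "c * t^n * (1 - t^2) \<le> 1" by (rule power2_le_imp_le) simp
    moreover have "1 - t^2 > 0" using t0 by (simp add: power_less_one_iff abs_less_iff)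
    ultimately show "norm (deriv G z) \<le> 1 / (1 - norm z ^ 2)"
      unfolding nd t_def[symmetric] by (simp add: field_simps)
  qed
  have coef: "taylor_coeff G (j + n + 1) = (if j = 0 then complex_of_real c / of_nat (n+1) else 0)" for j
  proof -
    have ev: "\<forall>\<^sub>F x in nhds 0. deriv G x = complex_of_real c * x^n"
    proof -
      have "\<forall>\<^sub>F x in nhds 0. x \<in> ball (0::complex) 1" by (rule eventually_nhds_in_open) auto
      then show ?thesis by (rule eventually_mono) (rule dG')
    qed
    have "(deriv ^^ (j+n)) (deriv G) 0 = (deriv ^^ (j+n)) (\<lambda>x. complex_of_real c * x^n) 0"
      by (rule higher_deriv_cong_ev[OF ev refl])
    also have "\<dots> = complex_of_real c * (deriv ^^ (j+n)) (\<lambda>x. x^n) 0"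
      by (rule higher_deriv_cmult[of _ UNIV]) (auto intro: holomorphic_intros)
    also have "(deriv ^^ (j+n)) (\<lambda>x::complex. x^n) 0 = pochhammer (of_nat (Suc n - (j+n))) (j+n)"
      using higher_deriv_power[of "j+n" 0 n 0] by simp
    also have "\<dots> = (if j = 0 then fact n else 0)"
      using assms by (cases j) (auto simp: pochhammer_fact pochhammer_0_left)
    finally have "(deriv ^^ (j+n)) (deriv G) 0 = (if j = 0 then complex_of_real c * fact n else 0)" by simp
    then have tcG: "taylor_coeff G (j + n + 1) = (if j = 0 then complex_of_real c * fact n else 0) / fact (Suc (j+n))"
      using tc_shift[of G "j+n"] by simp
    show ?thesis
    proof (cases "j = 0")
      case True
      have f: "(fact (Suc n) :: complex) = of_nat (n+1) * fact n" by (simp add: fact_Suc)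
      have "complex_of_real c * fact n / (of_nat (n+1) * fact n) = complex_of_real c / of_nat (n+1)"
        by (rule nonzero_mult_divide_mult_cancel_right) simp
      then show ?thesis using tcG True f by simp
    next
      case False
      then show ?thesis using tcG by simp
    qed
  qed
  fix r :: real assume "0 \<le> r" "r \<le> sqrt (real n / real (n + 2))"
  have teq: "real (j + n + 1) ^ 2 * norm (taylor_coeff G (j + n + 1)) ^ 2 * r ^ (2 * (j + n + 1) - 2)
      = (if j = 0 then c^2 * r^(2*n) else 0)" for j
  proof -
    have "norm (taylor_coeff G (j + n + 1)) = (if j = 0 then c / real (n+1) else 0)"
      unfolding coef[of j] using c0 by (simp only: norm_divide norm_of_nat norm_of_real norm_zero split: if_split) simp
    then show ?thesis by (simp add: power_divide)
  qed
  have "(\<lambda>j. real (j + n + 1) ^ 2 * norm (taylor_coeff G (j + n + 1)) ^ 2 * r ^ (2 * (j + n + 1) - 2))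
      sums (c^2 * r^(2*n))"
    unfolding teq using sums_single[of 0 "\<lambda>_. c^2 * r^(2*n)"] by simp
  then show "(\<Sum>j. real (j + n + 1) ^ 2 * norm (taylor_coeff G (j + n + 1)) ^ 2 * r ^ (2 * (j + n + 1) - 2))
      = real (n + 2) ^ (n + 2) / (4 * real n ^ n) * r ^ (2 * n)"
    unfolding target c2[symmetric] by (simp add: sums_iff)
qed

end
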